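(* Let $B_{\mathrm{lbl}}(x,y)=\sum_{i,j\ge0}2^{ij}\frac{x^iy^j}{i!\,j!}$, the exponential generating function for labelled bicoloured graphs, and let $T_{\mathrm{lbl}}(x,y)=\sum_{i,j\ge0}\tau_{i,j}\frac{x^iy^j}{i!\,j!}$, where $\tau_{i,j}$ is the number of edge sets $E\subseteq V_1\times V_2$ with $V_1=\{u_1,\dots,u_i\}$, $V_2=\{w_1,\dots,w_j\}$ fixed labelled sets such that $(V_1,V_2,E)$ is a tangle. Then \[T_{\mathrm{lbl}}(x,y)=e^{-x}+e^{-y}-1-B_{\mathrm{lbl}}(x,y)^{-1}.\]
   Context: A bicoloured graph is a triple $G=(V_1,V_2,E)$ with $V_1,V_2$ disjoint finite sets (ordered colour classes) and $E\subseteq V_1\times V_2$. For a vertex $u$ let $N(u)$ be its set of neighbours. $G$ is called a tangle if $|V_1|\ge2$, $|V_2|\ge2$, the graph on $V_2$ joining $a,b$ whenever neither of $N(a),N(b)$ contains the other is connected, and the graph on $V_1$ defined by the same rule is connected. (Equivalently, viewing $G$ as the poset on $V_1\cup V_2$ with $u<w$ iff $u\in V_1,w\in V_2$, $(u,w)\in E$, the whole poset is a single tangle with top $V_2$ and bottom $V_1$.) *)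

theory Defs
  imports "HOL-Computational_Algebra.Formal_Power_Series"
begin

text \<open>A bicoloured graph is given by colour classes V1 (bottom), V2 (top) and E \<subseteq> V1 \<times> V2.\<close>

definition nbr1 :: "'b set \<Rightarrow> ('a \<times> 'b) set \<Rightarrow> 'a \<Rightarrow> 'b set" where
  "nbr1 V2 E u = {w \<in> V2. (u, w) \<in> E}"

definition nbr2 :: "'a set \<Rightarrow> ('a \<times> 'b) set \<Rightarrow> 'b \<Rightarrow> 'a set" where
  "nbr2 V1 E w = {u \<in> V1. (u, w) \<in> E}"

definition connected_on :: "'c set \<Rightarrow> ('c \<Rightarrow> 'c \<Rightarrow> bool) \<Rightarrow> bool" where
  "connected_on S R \<longleftrightarrow>
     (\<forall>a\<in>S. \<forall>b\<in>S. (a, b) \<in> {(x, y). x \<in> S \<and> y \<in> S \<and> R x y}\<^sup>*)"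

definition incomparable :: "'c set \<Rightarrow> 'c set \<Rightarrow> bool" where
  "incomparable A B \<longleftrightarrow> \<not> A \<subseteq> B \<and> \<not> B \<subseteq> A"

definition tangle :: "'a set \<Rightarrow> 'b set \<Rightarrow> ('a \<times> 'b) set \<Rightarrow> bool" where
  "tangle V1 V2 E \<longleftrightarrow>
     E \<subseteq> V1 \<times> V2 \<and> card V1 \<ge> 2 \<and> card V2 \<ge> 2 \<and>
     connected_on V2 (\<lambda>a b. incomparable (nbr2 V1 E a) (nbr2 V1 E b)) \<and>
     connected_on V1 (\<lambda>a b. incomparable (nbr1 V2 E a) (nbr1 V2 E b))"

definition tau :: "nat \<Rightarrow> nat \<Rightarrow> nat" where
  "tau i j = card {E. E \<subseteq> {0..<i} \<times> {0..<j} \<and> tangle {0..<i} {0..<j} E}"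

text \<open>Bivariate formal power series in x, y are represented as (real fps) fps:
  the outer variable is x, the inner variable is y; coefficient of x^i y^j is (F $ i) $ j.\<close>

definition B_lbl :: "real fps fps" where
  "B_lbl = Abs_fps (\<lambda>i. Abs_fps (\<lambda>j. 2 ^ (i * j) / (fact i * fact j)))"

definition T_lbl :: "real fps fps" where
  "T_lbl = Abs_fps (\<lambda>i. Abs_fps (\<lambda>j. real (tau i j) / (fact i * fact j)))"

definition exp_neg_x :: "real fps fps" where
  "exp_neg_x = Abs_fps (\<lambda>i. fps_const ((-1) ^ i / fact i))"

definition exp_neg_y :: "real fps fps" where
  "exp_neg_y = fps_const (fps_exp (-1))"

end

theory Submission imports Defs "HOL-Library.FuncSet" begin
unbundle fps_syntax



definition valid_cut :: "'a set \<Rightarrow> 'b set \<Rightarrow> ('a \<times> 'b) set \<Rightarrow> 'a set \<Rightarrow> 'b set \<Rightarrow> bool" where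
  "valid_cut V1 V2 E A C \<longleftrightarrow> A \<subseteq> V1 \<and> C \<subseteq> V2 \<and> (V1 - A) \<times> C \<subseteq> E \<and> E \<inter> (A \<times> (V2 - C)) = {}"

definition prime_bg :: "'a set \<Rightarrow> 'b set \<Rightarrow> ('a \<times> 'b) set \<Rightarrow> bool" where
  "prime_bg V1 V2 E \<longleftrightarrow> (\<forall>A C. valid_cut V1 V2 E A C \<longrightarrow> (A = {} \<and> C = {}) \<or> (A = V1 \<and> C = V2))"

lemma rtrancl_cross:
  assumes "(a, b) \<in> r\<^sup>*" "a \<in> S" "b \<notin> S"
  shows "\<exists>x y. (x, y) \<in> r \<and> x \<in> S \<and> y \<notin> S"
  using assms
proof (induction rule: rtrancl_induct)
  case base then show ?case by simp
next
  case (step y z)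
  then show ?case by (cases "y \<in> S") auto
qed

lemma two_elems:
  assumes "card V \<ge> 2"
  obtains a b where "a \<in> V" "b \<in> V" "a \<noteq> b"
proof -
  have "finite V" "V \<noteq> {}" using assms by (auto intro: ccontr)
  then obtain a where a: "a \<in> V" by blast
  have "card (V - {a}) \<ge> 1" using assms a \<open>finite V\<close> by simp
  then obtain b where "b \<in> V - {a}"
    by (metis card.empty ex_in_conv not_one_le_zero)
  then show ?thesis using a that by blast
qed

lemma connected_on_no_cross:
  assumes "connected_on S R" "a \<in> S" "b \<in> S" "a \<in> X" "b \<notin> X"
  and "\<And>x y. x \<in> S \<Longrightarrow> y \<in> S \<Longrightarrow> x \<in> X \<Longrightarrow> y \<notin> X \<Longrightarrow> \<not> R x y"
  shows False
proof -
  have "(a, b) \<in> {(x, y). x \<in> S \<and> y \<in> S \<and> R x y}\<^sup>*"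
    using assms(1-3) unfolding connected_on_def by blast
  from rtrancl_cross[OF this assms(4,5)] assms(6) show False by blast
qed

lemma tangle_prime:
  assumes t: "tangle V1 V2 E"
  shows "prime_bg V1 V2 E"
  unfolding prime_bg_def
proof (intro allI impI)
  fix A C assume v: "valid_cut V1 V2 E A C"
  have cV1: "card V1 \<ge> 2" and cV2: "card V2 \<ge> 2"
    and c2: "connected_on V2 (\<lambda>a b. incomparable (nbr2 V1 E a) (nbr2 V1 E b))"
    and c1: "connected_on V1 (\<lambda>a b. incomparable (nbr1 V2 E a) (nbr1 V2 E b))"
    using t unfolding tangle_def by auto
  have AV: "A \<subseteq> V1" and CV: "C \<subseteq> V2" and full: "(V1 - A) \<times> C \<subseteq> E"
    and none: "E \<inter> (A \<times> (V2 - C)) = {}" using v unfolding valid_cut_def by auto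
  have C: "C = {} \<or> C = V2"
  proof (rule ccontr)
    assume "\<not> (C = {} \<or> C = V2)"
    then obtain w w' where w: "w \<in> C" and w': "w' \<in> V2" "w' \<notin> C" using CV by blast
    show False
    proof (rule connected_on_no_cross[OF c2 _ w'(1) w w'(2)])
      show "w \<in> V2" using w CV by blast
      fix x y assume "x \<in> V2" "y \<in> V2" "x \<in> C" "y \<notin> C"
      then have "nbr2 V1 E y \<subseteq> nbr2 V1 E x"
        using full none unfolding nbr2_def by blast
      then show "\<not> incomparable (nbr2 V1 E x) (nbr2 V1 E y)"
        unfolding incomparable_def by blast
    qed
  qed
  have A: "A = {} \<or> A = V1"
  proof (rule ccontr)
    assume "\<not> (A = {} \<or> A = V1)"
    then obtain u u' where u: "u \<in> A" and u': "u' \<in> V1" "u' \<notin> A" using AV by blast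
    show False
    proof (rule connected_on_no_cross[OF c1 _ u'(1) u u'(2)])
      show "u \<in> V1" using u AV by blast
      fix x y assume "x \<in> V1" "y \<in> V1" "x \<in> A" "y \<notin> A"
      then have "nbr1 V2 E x \<subseteq> nbr1 V2 E y"
        using full none unfolding nbr1_def by blast
      then show "\<not> incomparable (nbr1 V2 E x) (nbr1 V2 E y)"
        unfolding incomparable_def by blast
    qed
  qed
  obtain w1 w2 where w12: "w1 \<in> V2" "w2 \<in> V2" "w1 \<noteq> w2" using two_elems[OF cV2] by blast
  have eqn: False if "\<And>x y. x \<in> V2 \<Longrightarrow> y \<in> V2 \<Longrightarrow> nbr2 V1 E x = nbr2 V1 E y"
  proof (rule connected_on_no_cross[OF c2 w12(1) w12(2), of "{w1}"])
    show "w1 \<in> {w1}" "w2 \<notin> {w1}" using w12 by auto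
    fix x y assume "x \<in> V2" "y \<in> V2"
    then have "nbr2 V1 E x = nbr2 V1 E y" by (rule that)
    then show "\<not> incomparable (nbr2 V1 E x) (nbr2 V1 E y)"
      unfolding incomparable_def by auto
  qed
  show "(A = {} \<and> C = {}) \<or> (A = V1 \<and> C = V2)"
  proof (rule ccontr)
    assume nt: "\<not> ((A = {} \<and> C = {}) \<or> (A = V1 \<and> C = V2))"
    show False
    proof (cases "A = {}")
      case True
      then have "C = V2" using nt C by blast
      then have "\<And>x. x \<in> V2 \<Longrightarrow> nbr2 V1 E x = V1"
        using full True unfolding nbr2_def by blast
      then show False using eqn by metis
    next
      case False
      then have "A = V1" "C = {}" using nt C A by blast+
      then have "\<And>x. x \<in> V2 \<Longrightarrow> nbr2 V1 E x = {}"
        using none unfolding nbr2_def by blast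
      then show False using eqn by metis
    qed
  qed
qed


lemma full_cut: "u2 \<in> V2 \<Longrightarrow> V1 \<times> {u2} \<subseteq> E \<Longrightarrow> valid_cut V1 V2 E {} {u2}"
  unfolding valid_cut_def by auto

lemma iso_cut: "u1 \<in> V1 \<Longrightarrow> E \<inter> ({u1} \<times> V2) = {} \<Longrightarrow> valid_cut V1 V2 E {u1} {}"
  unfolding valid_cut_def by auto

lemma rtrancl_sym_conn:
  assumes sym: "\<And>x y. (x, y) \<in> r \<Longrightarrow> (y, x) \<in> r"
  and "(c, a) \<in> r\<^sup>*" "(c, b) \<in> r\<^sup>*"
  shows "(a, b) \<in> r\<^sup>*"
proof -
  have "r\<inverse> = r" using sym by auto
  moreover have "(a, c) \<in> (r\<inverse>)\<^sup>*" using assms(2) by (rule rtrancl_converseI)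
  ultimately have "(a, c) \<in> r\<^sup>*" by simp
  then show ?thesis using assms(3) by (rule rtrancl_trans)
qed

lemma prime_tangle:
  assumes EV: "E \<subseteq> V1 \<times> V2" and f1: "finite V1" and f2: "finite V2"
  and ne1: "V1 \<noteq> {}" and ne2: "V2 \<noteq> {}" and p: "prime_bg V1 V2 E"
  shows "tangle V1 V2 E"
proof -
  have P: "\<And>A C. valid_cut V1 V2 E A C \<Longrightarrow> (A = {} \<and> C = {}) \<or> (A = V1 \<and> C = V2)"
    using p unfolding prime_bg_def by blast
  have nofull: "\<not> V1 \<times> {w} \<subseteq> E" if "w \<in> V2" for w
    using P[OF full_cut[OF that]] ne1 by blast
  have noiso: "E \<inter> ({u} \<times> V2) \<noteq> {}" if "u \<in> V1" for u
    using P[OF iso_cut[OF that]] ne2 by blast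
  have c1: "card V1 \<ge> 2"
  proof (rule ccontr)
    assume "\<not> 2 \<le> card V1"
    moreover have "card V1 > 0" using ne1 f1 by (simp add: card_gt_0_iff)
    ultimately have "card V1 = 1" by arith
    then obtain u where u: "V1 = {u}" by (meson card_1_singletonE)
    from noiso[of u] u obtain w where w: "(u, w) \<in> E" "w \<in> V2" by blast
    then show False using nofull[OF w(2)] u by blast
  qed
  have c2: "card V2 \<ge> 2"
  proof (rule ccontr)
    assume "\<not> 2 \<le> card V2"
    moreover have "card V2 > 0" using ne2 f2 by (simp add: card_gt_0_iff)
    ultimately have "card V2 = 1" by arith
    then obtain w where w: "V2 = {w}" by (meson card_1_singletonE)
    from nofull[of w] w obtain u where u: "u \<in> V1" "(u, w) \<notin> E" by blast
    then show False using noiso[OF u(1)] w by blast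
  qed
  define R2 where "R2 = {(x, y). x \<in> V2 \<and> y \<in> V2 \<and> incomparable (nbr2 V1 E x) (nbr2 V1 E y)}"
  have conn2: "connected_on V2 (\<lambda>a b. incomparable (nbr2 V1 E a) (nbr2 V1 E b))"
  proof (rule ccontr)
    assume nc: "\<not> ?thesis"
    obtain w0 where w0: "w0 \<in> V2" "\<forall>w\<in>V2. card (nbr2 V1 E w0) \<le> card (nbr2 V1 E w)"
      using arg_min_if_finite[OF f2 ne2, of "\<lambda>w. card (nbr2 V1 E w)"] by (meson not_le)
    define D where "D = {w. (w0, w) \<in> R2\<^sup>*}"
    have DV: "D \<subseteq> V2" unfolding D_def
    proof
      fix w assume "w \<in> {w. (w0, w) \<in> R2\<^sup>*}"
      then have "(w0, w) \<in> R2\<^sup>*" by simp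
      then show "w \<in> V2" using w0(1) by (induction rule: rtrancl_induct) (auto simp: R2_def)
    qed
    have key: "nbr2 V1 E d \<subseteq> nbr2 V1 E w" if "d \<in> D" "w \<in> V2" "w \<notin> D" for d w
    proof -
      have "(w0, d) \<in> R2\<^sup>*" using that(1) unfolding D_def by simp
      then show ?thesis using that(1)
      proof (induction rule: rtrancl_induct)
        case base
        have "(w0, w) \<notin> R2" using that(3) unfolding D_def by auto
        then have "\<not> incomparable (nbr2 V1 E w0) (nbr2 V1 E w)" using w0(1) that(2) unfolding R2_def by blast
        then consider "nbr2 V1 E w0 \<subseteq> nbr2 V1 E w" | "nbr2 V1 E w \<subseteq> nbr2 V1 E w0"
          unfolding incomparable_def by blast
        then show ?case
        proof cases
          case 2
          have fin: "finite (nbr2 V1 E w0)" using f1 unfolding nbr2_def by simp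
          have "card (nbr2 V1 E w0) \<le> card (nbr2 V1 E w)" using w0(2) that(2) by blast
          then have "nbr2 V1 E w = nbr2 V1 E w0" using 2 fin by (simp add: card_seteq)
          then show ?thesis by simp
        qed simp
      next
        case (step y z)
        have yD: "y \<in> D" using step(1) unfolding D_def by simp
        have IH: "nbr2 V1 E y \<subseteq> nbr2 V1 E w" using step(3)[OF yD] .
        have "(z, w) \<notin> R2"
        proof
          assume "(z, w) \<in> R2"
          then have "(w0, w) \<in> R2\<^sup>*" using step(4) unfolding D_def by simp
          then show False using that(3) unfolding D_def by simp
        qed
        moreover have "z \<in> V2" using step(2) unfolding R2_def by simp
        ultimately have "\<not> incomparable (nbr2 V1 E z) (nbr2 V1 E w)" using that(2) unfolding R2_def by blast
        moreover have "incomparable (nbr2 V1 E y) (nbr2 V1 E z)" using step(2) unfolding R2_def by simp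
        ultimately show ?case using IH unfolding incomparable_def by blast
      qed
    qed
    have "D \<noteq> V2"
    proof
      assume DV2: "D = V2"
      have "(a, b) \<in> R2\<^sup>*" if "a \<in> V2" "b \<in> V2" for a b
      proof (rule rtrancl_sym_conn[of R2 w0])
        show "(x, y) \<in> R2 \<Longrightarrow> (y, x) \<in> R2" for x y unfolding R2_def incomparable_def by auto
        show "(w0, a) \<in> R2\<^sup>*" "(w0, b) \<in> R2\<^sup>*" using that DV2 unfolding D_def by auto
      qed
      then show False using nc unfolding connected_on_def R2_def by blast
    qed
    then obtain w1 where w1: "w1 \<in> V2" "w1 \<notin> D" using DV by blast
    define A'' where "A'' = {u \<in> V1. \<forall>d\<in>D. (u, d) \<notin> E}"
    have "valid_cut V1 V2 E A'' (V2 - D)"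
      unfolding valid_cut_def
    proof (intro conjI)
      show "A'' \<subseteq> V1" unfolding A''_def by blast
      show "V2 - D \<subseteq> V2" by blast
      show "(V1 - A'') \<times> (V2 - D) \<subseteq> E"
      proof clarify
        fix u w assume "u \<in> V1" "u \<notin> A''" "w \<in> V2" "w \<notin> D"
        then obtain d where "d \<in> D" "(u, d) \<in> E" unfolding A''_def by blast
        then have "u \<in> nbr2 V1 E d" using \<open>u \<in> V1\<close> unfolding nbr2_def by simp
        then show "(u, w) \<in> E" using key[OF \<open>d \<in> D\<close> \<open>w \<in> V2\<close> \<open>w \<notin> D\<close>] unfolding nbr2_def by blast
      qed
      show "E \<inter> A'' \<times> (V2 - (V2 - D)) = {}" using DV unfolding A''_def by blast
    qed
    from P[OF this] show False
    proof
      assume "A'' = {} \<and> V2 - D = {}" then show False using w1 by blast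
    next
      assume "A'' = V1 \<and> V2 - D = V2"
      moreover have "w0 \<in> D" unfolding D_def by simp
      ultimately show False using w0(1) by blast
    qed
  qed
  define R1 where "R1 = {(x, y). x \<in> V1 \<and> y \<in> V1 \<and> incomparable (nbr1 V2 E x) (nbr1 V2 E y)}"
  have conn1: "connected_on V1 (\<lambda>a b. incomparable (nbr1 V2 E a) (nbr1 V2 E b))"
  proof (rule ccontr)
    assume nc: "\<not> ?thesis"
    obtain u0 where u0: "u0 \<in> V1" "\<forall>u\<in>V1. card (nbr1 V2 E u) \<le> card (nbr1 V2 E u0)"
      using arg_min_if_finite[OF f1 ne1, of "\<lambda>w. - int (card (nbr1 V2 E w))"]
      by (metis neg_less_iff_less not_le of_nat_less_iff)
    define D where "D = {u. (u0, u) \<in> R1\<^sup>*}"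
    have DV: "D \<subseteq> V1" unfolding D_def
    proof
      fix w assume "w \<in> {w. (u0, w) \<in> R1\<^sup>*}"
      then have "(u0, w) \<in> R1\<^sup>*" by simp
      then show "w \<in> V1" using u0(1) by (induction rule: rtrancl_induct) (auto simp: R1_def)
    qed
    have key: "nbr1 V2 E w \<subseteq> nbr1 V2 E d" if "d \<in> D" "w \<in> V1" "w \<notin> D" for d w
    proof -
      have "(u0, d) \<in> R1\<^sup>*" using that(1) unfolding D_def by simp
      then show ?thesis using that(1)
      proof (induction rule: rtrancl_induct)
        case base
        have "(u0, w) \<notin> R1" using that(3) unfolding D_def by auto
        then have "\<not> incomparable (nbr1 V2 E u0) (nbr1 V2 E w)" using u0(1) that(2) unfolding R1_def by blast
        then consider "nbr1 V2 E w \<subseteq> nbr1 V2 E u0" | "nbr1 V2 E u0 \<subseteq> nbr1 V2 E w"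
          unfolding incomparable_def by blast
        then show ?case
        proof cases
          case 2
          have fin: "finite (nbr1 V2 E w)" using f2 unfolding nbr1_def by simp
          have "card (nbr1 V2 E w) \<le> card (nbr1 V2 E u0)" using u0(2) that(2) by blast
          then have "nbr1 V2 E u0 = nbr1 V2 E w" using 2 fin by (simp add: card_seteq)
          then show ?thesis by simp
        qed simp
      next
        case (step y z)
        have yD: "y \<in> D" using step(1) unfolding D_def by simp
        have IH: "nbr1 V2 E w \<subseteq> nbr1 V2 E y" using step(3)[OF yD] .
        have "(z, w) \<notin> R1"
        proof
          assume "(z, w) \<in> R1"
          then have "(u0, w) \<in> R1\<^sup>*" using step(4) unfolding D_def by simp
          then show False using that(3) unfolding D_def by simp
        qed
        moreover have "z \<in> V1" using step(2) unfolding R1_def by simp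
        ultimately have "\<not> incomparable (nbr1 V2 E z) (nbr1 V2 E w)" using that(2) unfolding R1_def by blast
        moreover have "incomparable (nbr1 V2 E y) (nbr1 V2 E z)" using step(2) unfolding R1_def by simp
        ultimately show ?case using IH unfolding incomparable_def by blast
      qed
    qed
    have "D \<noteq> V1"
    proof
      assume DV1: "D = V1"
      have "(a, b) \<in> R1\<^sup>*" if "a \<in> V1" "b \<in> V1" for a b
      proof (rule rtrancl_sym_conn[of R1 u0])
        show "(x, y) \<in> R1 \<Longrightarrow> (y, x) \<in> R1" for x y unfolding R1_def incomparable_def by auto
        show "(u0, a) \<in> R1\<^sup>*" "(u0, b) \<in> R1\<^sup>*" using that DV1 unfolding D_def by auto
      qed
      then show False using nc unfolding connected_on_def R1_def by blast
    qed
    then obtain u1 where u1: "u1 \<in> V1" "u1 \<notin> D" using DV by blast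
    define C'' where "C'' = {w \<in> V2. \<forall>d\<in>D. (d, w) \<in> E}"
    have "valid_cut V1 V2 E (V1 - D) C''"
      unfolding valid_cut_def
    proof (intro conjI)
      show "C'' \<subseteq> V2" unfolding C''_def by blast
      show "V1 - D \<subseteq> V1" by blast
      show "(V1 - (V1 - D)) \<times> C'' \<subseteq> E" using DV unfolding C''_def by blast
      show "E \<inter> (V1 - D) \<times> (V2 - C'') = {}"
      proof (rule ccontr)
        assume "E \<inter> (V1 - D) \<times> (V2 - C'') \<noteq> {}"
        then obtain u w where uw: "(u, w) \<in> E" "u \<in> V1" "u \<notin> D" "w \<in> V2" "w \<notin> C''" by blast
        then obtain d where d: "d \<in> D" "(d, w) \<notin> E" unfolding C''_def by blast
        have "w \<in> nbr1 V2 E u" using uw unfolding nbr1_def by simp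
        then show False using key[OF d(1) uw(2) uw(3)] d(2) unfolding nbr1_def by blast
      qed
    qed
    from P[OF this] show False
    proof
      assume "V1 - D = {} \<and> C'' = {}" then show False using u1 by blast
    next
      assume "V1 - D = V1 \<and> C'' = V2"
      moreover have "u0 \<in> D" unfolding D_def by simp
      ultimately show False using u0(1) by blast
    qed
  qed
  show ?thesis unfolding tangle_def using EV c1 c2 conn1 conn2 by blast
qed


definition tops :: "'a set \<Rightarrow> 'b set \<Rightarrow> ('a \<times> 'b) set \<Rightarrow> ('a set \<times> 'b set) set" where
  "tops V1 V2 E = {(A, C). valid_cut V1 V2 E A C \<and> tangle A C (E \<inter> (A \<times> C))}"

lemma restrict_cut:
  "valid_cut V1 V2 E A C \<Longrightarrow> valid_cut A C (E \<inter> (A \<times> C)) A2 C2 \<Longrightarrow> valid_cut V1 V2 E A2 C2"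
  unfolding valid_cut_def by blast

lemma inter_cut:
  "valid_cut V1 V2 E A1 C1 \<Longrightarrow> valid_cut V1 V2 E A2 C2 \<Longrightarrow>
   valid_cut A1 C1 (E \<inter> (A1 \<times> C1)) (A1 \<inter> A2) (C1 \<inter> C2)"
  unfolding valid_cut_def by blast

lemma top_no_iso:
  assumes "(A, C) \<in> tops V1 V2 E" "u \<in> V1" "\<forall>w\<in>V2. (u, w) \<notin> E"
  shows False
proof -
  have v: "valid_cut V1 V2 E A C" and t: "tangle A C (E \<inter> (A \<times> C))"
    using assms(1) unfolding tops_def by auto
  have cA: "card A \<ge> 2" and cC: "card C \<ge> 2"
    and c1: "connected_on A (\<lambda>a b. incomparable (nbr1 C (E \<inter> (A \<times> C)) a) (nbr1 C (E \<inter> (A \<times> C)) b))"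
    using t unfolding tangle_def by auto
  obtain w where w: "w \<in> C" using two_elems[OF cC] by blast
  have uA: "u \<in> A"
  proof (rule ccontr)
    assume "u \<notin> A"
    then have "(u, w) \<in> E" using v w assms(2) unfolding valid_cut_def by blast
    then show False using assms(3) v w unfolding valid_cut_def by blast
  qed
  obtain a b where ab: "a \<in> A" "b \<in> A" "a \<noteq> b" using two_elems[OF cA] by blast
  obtain a' where a': "a' \<in> A" "a' \<noteq> u" using ab by blast
  have n: "nbr1 C (E \<inter> (A \<times> C)) u = {}" using assms(3) v unfolding nbr1_def valid_cut_def by blast
  show False
  proof (rule connected_on_no_cross[OF c1 uA a'(1), of "{u}"])
    show "u \<in> {u}" "a' \<notin> {u}" using a' by auto
    fix x y assume "x \<in> {u}"
    then show "\<not> incomparable (nbr1 C (E \<inter> (A \<times> C)) x) (nbr1 C (E \<inter> (A \<times> C)) y)"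
      using n unfolding incomparable_def by auto
  qed
qed

lemma top_no_full:
  assumes "(A, C) \<in> tops V1 V2 E" "w \<in> V2" "\<forall>u\<in>V1. (u, w) \<in> E"
  shows False
proof -
  have v: "valid_cut V1 V2 E A C" and t: "tangle A C (E \<inter> (A \<times> C))"
    using assms(1) unfolding tops_def by auto
  have cA: "card A \<ge> 2" and cC: "card C \<ge> 2"
    and c2: "connected_on C (\<lambda>a b. incomparable (nbr2 A (E \<inter> (A \<times> C)) a) (nbr2 A (E \<inter> (A \<times> C)) b))"
    using t unfolding tangle_def by auto
  obtain u where u: "u \<in> A" using two_elems[OF cA] by blast
  have wC: "w \<in> C"
  proof (rule ccontr)
    assume "w \<notin> C"
    moreover have "(u, w) \<in> E" using assms(3) u v unfolding valid_cut_def by blast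
    ultimately show False using v u assms(2) unfolding valid_cut_def by blast
  qed
  obtain a b where ab: "a \<in> C" "b \<in> C" "a \<noteq> b" using two_elems[OF cC] by blast
  obtain a' where a': "a' \<in> C" "a' \<noteq> w" using ab by blast
  have n: "nbr2 A (E \<inter> (A \<times> C)) w = A" using assms(3) v wC unfolding nbr2_def valid_cut_def by blast
  show False
  proof (rule connected_on_no_cross[OF c2 wC a'(1), of "{w}"])
    show "w \<in> {w}" "a' \<notin> {w}" using a' by auto
    fix x y assume "x \<in> {w}"
    moreover have "nbr2 A (E \<inter> (A \<times> C)) y \<subseteq> A" unfolding nbr2_def by blast
    ultimately show "\<not> incomparable (nbr2 A (E \<inter> (A \<times> C)) x) (nbr2 A (E \<inter> (A \<times> C)) y)"
      using n unfolding incomparable_def by auto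
  qed
qed

lemma top_unique:
  assumes "(A1, C1) \<in> tops V1 V2 E" "(A2, C2) \<in> tops V1 V2 E"
  shows "A1 = A2 \<and> C1 = C2"
proof -
  have v1: "valid_cut V1 V2 E A1 C1" and t1: "tangle A1 C1 (E \<inter> (A1 \<times> C1))"
    using assms(1) unfolding tops_def by auto
  have v2: "valid_cut V1 V2 E A2 C2" and t2: "tangle A2 C2 (E \<inter> (A2 \<times> C2))"
    using assms(2) unfolding tops_def by auto
  have ne: "A1 \<noteq> {}" "C1 \<noteq> {}" "A2 \<noteq> {}" "C2 \<noteq> {}"
    using t1 t2 unfolding tangle_def by auto
  have i1: "(A1 \<inter> A2 = {} \<and> C1 \<inter> C2 = {}) \<or> (A1 \<inter> A2 = A1 \<and> C1 \<inter> C2 = C1)"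
    using tangle_prime[OF t1] inter_cut[OF v1 v2] unfolding prime_bg_def by blast
  have i2: "(A2 \<inter> A1 = {} \<and> C2 \<inter> C1 = {}) \<or> (A2 \<inter> A1 = A2 \<and> C2 \<inter> C1 = C2)"
    using tangle_prime[OF t2] inter_cut[OF v2 v1] unfolding prime_bg_def by blast
  show ?thesis
  proof (cases "A1 \<inter> A2 = {} \<and> C1 \<inter> C2 = {}")
    case True
    have "A2 \<times> C1 \<subseteq> E" using v1 v2 True unfolding valid_cut_def by blast
    moreover have "E \<inter> (A2 \<times> C1) = {}" using v1 v2 True unfolding valid_cut_def by blast
    ultimately show ?thesis using ne by blast
  next
    case False
    then show ?thesis using i1 i2 ne by blast
  qed
qed

lemma top_exists:
  assumes f1: "finite V1" and f2: "finite V2" and EV: "E \<subseteq> V1 \<times> V2"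
  and ne: "V1 \<noteq> {} \<or> V2 \<noteq> {}"
  and noiso: "\<forall>u\<in>V1. \<exists>w\<in>V2. (u, w) \<in> E"
  and nofull: "\<forall>w\<in>V2. \<exists>u\<in>V1. (u, w) \<notin> E"
  shows "\<exists>t. t \<in> tops V1 V2 E"
proof -
  define P where "P = {(A, C). A \<subseteq> V1 \<and> C \<subseteq> V2 \<and> valid_cut V1 V2 E A C \<and> (A \<noteq> {} \<or> C \<noteq> {})}"
  have finP: "finite P"
  proof (rule finite_subset)
    show "P \<subseteq> Pow V1 \<times> Pow V2" unfolding P_def by auto
    show "finite (Pow V1 \<times> Pow V2)" using f1 f2 by simp
  qed
  have "(V1, V2) \<in> P" using ne unfolding P_def valid_cut_def by auto
  then have neP: "P \<noteq> {}" by blast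
  define f where "f = (\<lambda>p :: 'a set \<times> 'b set. card (fst p) + card (snd p))"
  obtain A C where AC: "(A, C) \<in> P" and min: "\<And>p. p \<in> P \<Longrightarrow> f (A, C) \<le> f p"
    using arg_min_if_finite[OF finP neP, of f] by (metis not_le surj_pair)
  have v: "valid_cut V1 V2 E A C" and AV: "A \<subseteq> V1" and CV: "C \<subseteq> V2" and ACne: "A \<noteq> {} \<or> C \<noteq> {}"
    using AC unfolding P_def by auto
  have fA: "finite A" "finite C" using AV CV f1 f2 finite_subset by auto
  have Ane: "A \<noteq> {}"
  proof
    assume "A = {}"
    then obtain w where "w \<in> C" using ACne by blast
    moreover have "V1 \<times> C \<subseteq> E" using v \<open>A = {}\<close> unfolding valid_cut_def by simp
    ultimately show False using nofull CV by blast
  qed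
  have Cne: "C \<noteq> {}"
  proof
    assume "C = {}"
    obtain u where "u \<in> A" using Ane by blast
    moreover have "E \<inter> (A \<times> V2) = {}" using v \<open>C = {}\<close> unfolding valid_cut_def by simp
    ultimately show False using noiso AV by blast
  qed
  have "prime_bg A C (E \<inter> (A \<times> C))"
    unfolding prime_bg_def
  proof (intro allI impI)
    fix A2 C2 assume v2: "valid_cut A C (E \<inter> (A \<times> C)) A2 C2"
    have s: "A2 \<subseteq> A" "C2 \<subseteq> C" using v2 unfolding valid_cut_def by auto
    show "(A2 = {} \<and> C2 = {}) \<or> (A2 = A \<and> C2 = C)"
    proof (cases "A2 = {} \<and> C2 = {}")
      case False
      then have "(A2, C2) \<in> P" using restrict_cut[OF v v2] s AV CV unfolding P_def by auto
      then have "card A + card C \<le> card A2 + card C2" using min unfolding f_def by fastforce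
      moreover have "card A2 \<le> card A" "card C2 \<le> card C" using s fA by (auto intro: card_mono)
      ultimately have "card A2 = card A" "card C2 = card C" by arith+
      then have "A2 = A" "C2 = C" using card_seteq[of A A2] card_seteq[of C C2] s fA by auto
      then show ?thesis by simp
    qed simp
  qed
  then have "tangle A C (E \<inter> (A \<times> C))"
    using prime_tangle[of "E \<inter> (A \<times> C)" A C] fA Ane Cne by blast
  then show ?thesis using v unfolding tops_def by blast
qed

lemma tops_count:
  assumes f1: "finite V1" and f2: "finite V2" and EV: "E \<subseteq> V1 \<times> V2"
  and ne: "V1 \<noteq> {} \<or> V2 \<noteq> {}"
  shows "int (card (tops V1 V2 E)) =
    (if \<forall>u\<in>V1. \<exists>w\<in>V2. (u, w) \<in> E then 1 else 0) + (if \<forall>w\<in>V2. \<exists>u\<in>V1. (u, w) \<notin> E then 1 else 0) - 1"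
proof (cases "\<forall>u\<in>V1. \<exists>w\<in>V2. (u, w) \<in> E")
  case False
  then obtain u where u: "u \<in> V1" "\<forall>w\<in>V2. (u, w) \<notin> E" by blast
  then have "tops V1 V2 E = {}" using top_no_iso by fast
  moreover have "\<forall>w\<in>V2. \<exists>u\<in>V1. (u, w) \<notin> E" using u by blast
  ultimately show ?thesis using False by simp
next
  case T1: True
  show ?thesis
  proof (cases "\<forall>w\<in>V2. \<exists>u\<in>V1. (u, w) \<notin> E")
    case False
    then obtain w where w: "w \<in> V2" "\<forall>u\<in>V1. (u, w) \<in> E" by blast
    then have "tops V1 V2 E = {}" using top_no_full by fast
    then show ?thesis using False T1 by simp
  next
    case True
    obtain t where t: "t \<in> tops V1 V2 E" using top_exists[OF f1 f2 EV ne T1 True] by blast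
    have "tops V1 V2 E = {t}"
    proof safe
      fix A C assume "(A, C) \<in> tops V1 V2 E"
      then show "(A, C) = t" using t top_unique by (metis prod.collapse)
    qed (use t in simp)
    then show ?thesis using T1 True by simp
  qed
qed



lemma conn_map:
  assumes c: "connected_on S R" and T: "T = h ` S"
  and m: "\<And>a b. a \<in> S \<Longrightarrow> b \<in> S \<Longrightarrow> R a b \<Longrightarrow> R' (h a) (h b)"
  shows "connected_on T R'"
  unfolding connected_on_def
proof (intro ballI)
  fix x y assume "x \<in> T" "y \<in> T"
  then obtain a b where ab: "a \<in> S" "b \<in> S" "x = h a" "y = h b" using T by blast
  have "(a, b) \<in> {(x, y). x \<in> S \<and> y \<in> S \<and> R x y}\<^sup>*" using c ab unfolding connected_on_def by blast
  then have "(h a, h b) \<in> {(x, y). x \<in> T \<and> y \<in> T \<and> R' x y}\<^sup>*"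
  proof (induction rule: rtrancl_induct)
    case base then show ?case by simp
  next
    case (step y z)
    then have "(h y, h z) \<in> {(x, y). x \<in> T \<and> y \<in> T \<and> R' x y}" using T m by blast
    then show ?case by (rule rtrancl_into_rtrancl[OF step(3)])
  qed
  then show "(x, y) \<in> {(x, y). x \<in> T \<and> y \<in> T \<and> R' x y}\<^sup>*" using ab by simp
qed

lemma conn_image:
  assumes inj: "inj_on h S"
  and m: "\<And>a b. a \<in> S \<Longrightarrow> b \<in> S \<Longrightarrow> R' (h a) (h b) = R a b"
  shows "connected_on (h ` S) R' = connected_on S R"
proof
  assume c: "connected_on S R"
  show "connected_on (h ` S) R'" by (rule conn_map[OF c refl]) (simp add: m)
next
  assume c: "connected_on (h ` S) R'"
  let ?h' = "inv_into S h"
  have "S = ?h' ` (h ` S)" using inj by simp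
  moreover have "R (?h' x) (?h' y)" if xy: "x \<in> h ` S" "y \<in> h ` S" "R' x y" for x y
  proof -
    obtain a b where "a \<in> S" "b \<in> S" "x = h a" "y = h b" using xy(1,2) by blast
    then show ?thesis using xy(3) m inj by simp
  qed
  ultimately show "connected_on S R" by (rule conn_map[OF c])
qed

lemma incomp_image:
  assumes "inj_on f X" "P \<subseteq> X" "Q \<subseteq> X"
  shows "incomparable (f ` P) (f ` Q) = incomparable P Q"
proof -
  have "(f ` P \<subseteq> f ` Q) = (P \<subseteq> Q)" if PQ: "P \<subseteq> X" "Q \<subseteq> X" for P Q
  proof -
    have "(f ` P \<subseteq> f ` Q) = (\<forall>x\<in>P. f x \<in> f ` Q)" by blast
    also have "\<dots> = (\<forall>x\<in>P. x \<in> Q)" using inj_on_image_mem_iff[OF assms(1) _ PQ(2)] PQ(1) by blast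
    finally show ?thesis by blast
  qed
  then show ?thesis using assms(2,3) unfolding incomparable_def by blast
qed

lemma collect_image: "{y \<in> f ` X. P y} = f ` {x \<in> X. P (f x)}"
  by blast

lemma tangle_image:
  assumes f: "inj_on f X" and g: "inj_on g Y" and K: "K \<subseteq> X \<times> Y"
  shows "tangle (f ` X) (g ` Y) (map_prod f g ` K) = tangle X Y K"
proof -
  let ?K = "map_prod f g ` K"
  have mem: "((f u, g w) \<in> ?K) = ((u, w) \<in> K)" if "u \<in> X" "w \<in> Y" for u w
  proof
    assume "(f u, g w) \<in> ?K"
    then obtain u' w' where "(u', w') \<in> K" "f u' = f u" "g w' = g w" by auto
    moreover then have "u' = u" "w' = w" using K that f g unfolding inj_on_def by blast+
    ultimately show "(u, w) \<in> K" by simp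
  qed force
  have n2: "nbr2 (f ` X) ?K (g w) = f ` nbr2 X K w" if w: "w \<in> Y" for w
  proof -
    have "nbr2 (f ` X) ?K (g w) = f ` {u \<in> X. (f u, g w) \<in> ?K}" unfolding nbr2_def by (rule collect_image)
    also have "{u \<in> X. (f u, g w) \<in> ?K} = {u \<in> X. (u, w) \<in> K}" by (rule Collect_cong, rule conj_cong[OF refl], rule mem) (simp_all add: w)
    finally show ?thesis unfolding nbr2_def .
  qed
  have n1: "nbr1 (g ` Y) ?K (f u) = g ` nbr1 Y K u" if u: "u \<in> X" for u
  proof -
    have "nbr1 (g ` Y) ?K (f u) = g ` {w \<in> Y. (f u, g w) \<in> ?K}" unfolding nbr1_def by (rule collect_image)
    also have "{w \<in> Y. (f u, g w) \<in> ?K} = {w \<in> Y. (u, w) \<in> K}" by (rule Collect_cong, rule conj_cong[OF refl], rule mem) (simp_all add: u)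
    finally show ?thesis unfolding nbr1_def .
  qed
  have sub2: "\<And>w. nbr2 X K w \<subseteq> X" unfolding nbr2_def by blast
  have sub1: "\<And>u. nbr1 Y K u \<subseteq> Y" unfolding nbr1_def by blast
  have c2: "connected_on (g ` Y) (\<lambda>a b. incomparable (nbr2 (f ` X) ?K a) (nbr2 (f ` X) ?K b))
      = connected_on Y (\<lambda>a b. incomparable (nbr2 X K a) (nbr2 X K b))"
    by (rule conn_image[OF g]) (simp add: n2 incomp_image[OF f sub2 sub2])
  have c1: "connected_on (f ` X) (\<lambda>a b. incomparable (nbr1 (g ` Y) ?K a) (nbr1 (g ` Y) ?K b))
      = connected_on X (\<lambda>a b. incomparable (nbr1 Y K a) (nbr1 Y K b))"
    by (rule conn_image[OF f]) (simp add: n1 incomp_image[OF g sub1 sub1])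
  have "?K \<subseteq> f ` X \<times> g ` Y" using K by auto
  then show ?thesis unfolding tangle_def using c1 c2 K card_image[OF f] card_image[OF g] by simp
qed

definition tc :: "'a set \<Rightarrow> 'b set \<Rightarrow> nat" where
  "tc A C = card {K. K \<subseteq> A \<times> C \<and> tangle A C K}"

lemma tc_image:
  assumes f: "inj_on f X" and g: "inj_on g Y"
  shows "tc (f ` X) (g ` Y) = tc X Y"
proof -
  have inj: "inj_on (image (map_prod f g)) {K. K \<subseteq> X \<times> Y \<and> tangle X Y K}"
    by (rule inj_on_subset[OF inj_on_image_Pow[OF map_prod_inj_on[OF f g]]]) auto
  have "image (map_prod f g) ` {K. K \<subseteq> X \<times> Y \<and> tangle X Y K}
      = {K. K \<subseteq> f ` X \<times> g ` Y \<and> tangle (f ` X) (g ` Y) K}"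
  proof (rule subset_antisym)
    show "image (map_prod f g) ` {K. K \<subseteq> X \<times> Y \<and> tangle X Y K}
      \<subseteq> {K. K \<subseteq> f ` X \<times> g ` Y \<and> tangle (f ` X) (g ` Y) K}"
    proof
      fix K' assume "K' \<in> image (map_prod f g) ` {K. K \<subseteq> X \<times> Y \<and> tangle X Y K}"
      then obtain K where K: "K \<subseteq> X \<times> Y" "tangle X Y K" "K' = map_prod f g ` K" by blast
      have "K' \<subseteq> f ` X \<times> g ` Y" using K(1,3) by auto
      moreover have "tangle (f ` X) (g ` Y) K'" using tangle_image[OF f g K(1)] K(2,3) by simp
      ultimately show "K' \<in> {K. K \<subseteq> f ` X \<times> g ` Y \<and> tangle (f ` X) (g ` Y) K}" by blast
    qed
  next
    show "{K. K \<subseteq> f ` X \<times> g ` Y \<and> tangle (f ` X) (g ` Y) K}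
      \<subseteq> image (map_prod f g) ` {K. K \<subseteq> X \<times> Y \<and> tangle X Y K}"
    proof
    fix K' assume "K' \<in> {K. K \<subseteq> f ` X \<times> g ` Y \<and> tangle (f ` X) (g ` Y) K}"
    then have K': "K' \<subseteq> f ` X \<times> g ` Y" "tangle (f ` X) (g ` Y) K'" by auto
    define K where "K = {(u, w) \<in> X \<times> Y. (f u, g w) \<in> K'}"
    have KK: "map_prod f g ` K = K'" using K'(1) unfolding K_def by force
    have "K \<subseteq> X \<times> Y" unfolding K_def by blast
    moreover have "tangle X Y K" using K'(2) tangle_image[OF f g \<open>K \<subseteq> X \<times> Y\<close>] KK by simp
    ultimately show "K' \<in> image (map_prod f g) ` {K. K \<subseteq> X \<times> Y \<and> tangle X Y K}"
      using KK by blast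
    qed
  qed
  then show ?thesis unfolding tc_def using card_image[OF inj] by simp
qed

lemma tc_tau:
  assumes "finite X" "finite Y"
  shows "tc X Y = tau (card X) (card Y)"
proof -
  obtain f where f: "bij_betw f X {0..<card X}" using ex_bij_betw_finite_nat[OF assms(1)] by blast
  obtain g where g: "bij_betw g Y {0..<card Y}" using ex_bij_betw_finite_nat[OF assms(2)] by blast
  have "tc X Y = tc (f ` X) (g ` Y)" using tc_image f g unfolding bij_betw_def by metis
  also have "\<dots> = tc {0..<card X} {0..<card Y}" using f g unfolding bij_betw_def by simp
  finally show ?thesis unfolding tc_def tau_def .
qed

lemma count_rows:
  assumes fX: "finite X" and fY: "finite Y"
  shows "card {E \<in> Pow (X \<times> Y). \<forall>u\<in>X. Q (E `` {u})} = card {B \<in> Pow Y. Q B} ^ card X"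
proof -
  let ?P = "PiE X (\<lambda>_. {B \<in> Pow Y. Q B})"
  have inj: "inj_on (Sigma X) ?P"
  proof (rule inj_onI)
    fix f f' assume ff: "f \<in> ?P" "f' \<in> ?P" "Sigma X f = Sigma X f'"
    show "f = f'"
    proof (rule PiE_ext[OF ff(1) ff(2)])
      fix u assume "u \<in> X"
      then have "Sigma X f `` {u} = f u" "Sigma X f' `` {u} = f' u" by auto
      then show "f u = f' u" using ff(3) by simp
    qed
  qed
  have img: "Sigma X ` ?P = {E \<in> Pow (X \<times> Y). \<forall>u\<in>X. Q (E `` {u})}"
  proof (rule subset_antisym)
    show "Sigma X ` ?P \<subseteq> {E \<in> Pow (X \<times> Y). \<forall>u\<in>X. Q (E `` {u})}"
    proof
      fix E assume "E \<in> Sigma X ` ?P"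
      then obtain f where f: "f \<in> ?P" "E = Sigma X f" by blast
      have "E \<subseteq> X \<times> Y" using f by (auto simp: PiE_def Pi_def)
      moreover have "Q (E `` {u})" if "u \<in> X" for u
      proof -
        have "E `` {u} = f u" using f(2) that by auto
        then show ?thesis using f(1) that by (auto simp: PiE_def Pi_def)
      qed
      ultimately show "E \<in> {E \<in> Pow (X \<times> Y). \<forall>u\<in>X. Q (E `` {u})}" by blast
    qed
  next
    show "{E \<in> Pow (X \<times> Y). \<forall>u\<in>X. Q (E `` {u})} \<subseteq> Sigma X ` ?P"
    proof
      fix E assume "E \<in> {E \<in> Pow (X \<times> Y). \<forall>u\<in>X. Q (E `` {u})}"
      then have E: "E \<subseteq> X \<times> Y" "\<forall>u\<in>X. Q (E `` {u})" by auto
      let ?f = "restrict (\<lambda>u. E `` {u}) X"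
      have "\<forall>u\<in>X. E `` {u} \<subseteq> Y" using E(1) by blast
      then have "?f \<in> ?P" using E(2) by (simp add: restrict_PiE_iff)
      have "Sigma X ?f = Sigma X (\<lambda>u. E `` {u})" by (rule Sigma_cong) auto
      also have "\<dots> = E" using E(1) by blast
      finally have eqE: "Sigma X ?f = E" .
      show "E \<in> Sigma X ` ?P" by (rule rev_image_eqI[OF \<open>?f \<in> ?P\<close>]) (simp add: eqE)
    qed
  qed
  have "card {E \<in> Pow (X \<times> Y). \<forall>u\<in>X. Q (E `` {u})} = card ?P" using card_image[OF inj] img by simp
  also have "\<dots> = card {B \<in> Pow Y. Q B} ^ card X" using fX by (simp add: card_PiE)
  finally show ?thesis .
qed

lemma count_cols:
  assumes fX: "finite X" and fY: "finite Y"
  shows "card {E \<in> Pow (X \<times> Y). \<forall>w\<in>Y. Q (E\<inverse> `` {w})} = card {B \<in> Pow X. Q B} ^ card Y"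
proof -
  let ?S = "{E \<in> Pow (Y \<times> X). \<forall>w\<in>Y. Q (E `` {w})}"
  let ?T = "{E \<in> Pow (X \<times> Y). \<forall>w\<in>Y. Q (E\<inverse> `` {w})}"
  have eq: "?T = converse ` ?S"
  proof (rule subset_antisym)
    show "?T \<subseteq> converse ` ?S"
    proof
      fix E assume "E \<in> ?T"
      then have "E\<inverse> \<in> ?S" by auto
      moreover have "E = (E\<inverse>)\<inverse>" by simp
      ultimately show "E \<in> converse ` ?S" by (rule rev_image_eqI)
    qed
  next
    show "converse ` ?S \<subseteq> ?T"
    proof
      fix E assume "E \<in> converse ` ?S"
      then obtain E' where E': "E' \<in> ?S" "E = E'\<inverse>" by blast
      then have "E \<subseteq> X \<times> Y" by blast
      moreover have "\<forall>w\<in>Y. Q (E\<inverse> `` {w})" using E' by simp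
      ultimately show "E \<in> ?T" by simp
    qed
  qed
  have inj: "inj_on converse ?S" by (rule inj_onI) simp
  have "card ?T = card ?S" unfolding eq by (rule card_image[OF inj])
  then show ?thesis using count_rows[OF fY fX] by simp
qed

lemma sum_Pow_card:
  fixes f :: "nat \<Rightarrow> 'a::comm_semiring_1"
  assumes "finite S"
  shows "(\<Sum>A\<in>Pow S. f (card A)) = (\<Sum>k\<le>card S. of_nat (card S choose k) * f k)"
proof -
  have "(\<Sum>A\<in>Pow S. f (card A)) = (\<Sum>k\<le>card S. \<Sum>A\<in>{A. A \<in> Pow S \<and> card A = k}. f (card A))"
    by (rule sum.group[symmetric]) (use assms in \<open>auto intro: card_mono\<close>)
  also have "\<dots> = (\<Sum>k\<le>card S. of_nat (card S choose k) * f k)"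
  proof (rule sum.cong[OF refl])
    fix k
    have "(\<Sum>A\<in>{A. A \<in> Pow S \<and> card A = k}. f (card A)) = (\<Sum>A\<in>{A. A \<in> Pow S \<and> card A = k}. f k)"
      by simp
    also have "\<dots> = of_nat (card {A. A \<subseteq> S \<and> card A = k}) * f k" by simp
    also have "\<dots> = of_nat (card S choose k) * f k" using n_subsets[OF assms] by simp
    finally show "(\<Sum>A\<in>{A. A \<in> Pow S \<and> card A = k}. f (card A)) = of_nat (card S choose k) * f k" .
  qed
  finally show ?thesis .
qed


lemma tops_sub: "tops V1 V2 E \<subseteq> Pow V1 \<times> Pow V2"
  unfolding tops_def valid_cut_def by auto

lemma fiber_count:
  assumes f1: "finite V1" and f2: "finite V2" and AV: "A \<subseteq> V1" and CV: "C \<subseteq> V2"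
  shows "card {E \<in> Pow (V1 \<times> V2). (A, C) \<in> tops V1 V2 E} = 2 ^ (card (V1 - A) * card (V2 - C)) * tc A C"
proof -
  let ?H = "Pow ((V1 - A) \<times> (V2 - C))"
  let ?Ks = "{K. K \<subseteq> A \<times> C \<and> tangle A C K}"
  let ?phi = "\<lambda>(H, K). H \<union> K \<union> ((V1 - A) \<times> C)"
  have inj: "inj_on ?phi (?H \<times> ?Ks)"
  proof (rule inj_onI)
    fix p q assume p: "p \<in> ?H \<times> ?Ks" and q: "q \<in> ?H \<times> ?Ks" and e: "?phi p = ?phi q"
    obtain H K where pHK: "p = (H, K)" by fastforce
    obtain H' K' where qHK: "q = (H', K')" by fastforce
    have "?phi p \<inter> ((V1 - A) \<times> (V2 - C)) = H" "?phi p \<inter> (A \<times> C) = K"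
      using p unfolding pHK by auto
    moreover have "?phi q \<inter> ((V1 - A) \<times> (V2 - C)) = H'" "?phi q \<inter> (A \<times> C) = K'"
      using q unfolding qHK by auto
    ultimately show "p = q" using e pHK qHK by simp
  qed
  have img: "?phi ` (?H \<times> ?Ks) = {E \<in> Pow (V1 \<times> V2). (A, C) \<in> tops V1 V2 E}"
  proof (rule subset_antisym)
    show "?phi ` (?H \<times> ?Ks) \<subseteq> {E \<in> Pow (V1 \<times> V2). (A, C) \<in> tops V1 V2 E}"
    proof
      fix E assume "E \<in> ?phi ` (?H \<times> ?Ks)"
      then obtain H K where HK: "H \<in> ?H" "K \<in> ?Ks" "E = H \<union> K \<union> ((V1 - A) \<times> C)" by auto
      have EV: "E \<subseteq> V1 \<times> V2" using HK AV CV by auto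
      have v: "valid_cut V1 V2 E A C" unfolding valid_cut_def using HK AV CV by auto
      have "E \<inter> (A \<times> C) = K" using HK by auto
      then have "tangle A C (E \<inter> (A \<times> C))" using HK by simp
      then show "E \<in> {E \<in> Pow (V1 \<times> V2). (A, C) \<in> tops V1 V2 E}" using EV v unfolding tops_def by simp
    qed
  next
    show "{E \<in> Pow (V1 \<times> V2). (A, C) \<in> tops V1 V2 E} \<subseteq> ?phi ` (?H \<times> ?Ks)"
    proof
      fix E assume "E \<in> {E \<in> Pow (V1 \<times> V2). (A, C) \<in> tops V1 V2 E}"
      then have EV: "E \<subseteq> V1 \<times> V2" and v: "valid_cut V1 V2 E A C" and t: "tangle A C (E \<inter> (A \<times> C))"
        unfolding tops_def by auto
      have eqE: "E = (E \<inter> ((V1 - A) \<times> (V2 - C))) \<union> (E \<inter> (A \<times> C)) \<union> ((V1 - A) \<times> C)"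
        using EV v unfolding valid_cut_def by blast
      have mem: "(E \<inter> ((V1 - A) \<times> (V2 - C)), E \<inter> (A \<times> C)) \<in> ?H \<times> ?Ks" using t by auto
      show "E \<in> ?phi ` (?H \<times> ?Ks)" by (rule rev_image_eqI[OF mem]) (simp only: prod.case, rule eqE)
    qed
  qed
  have "card {E \<in> Pow (V1 \<times> V2). (A, C) \<in> tops V1 V2 E} = card (?H \<times> ?Ks)"
    unfolding img[symmetric] by (rule card_image[OF inj])
  also have "\<dots> = 2 ^ (card (V1 - A) * card (V2 - C)) * tc A C"
    using f1 f2 by (simp add: card_cartesian_product card_Pow tc_def)
  finally show ?thesis .
qed

lemma sum_tops:
  assumes f1: "finite V1" and f2: "finite V2"
  shows "(\<Sum>E\<in>Pow (V1 \<times> V2). card (tops V1 V2 E))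
       = (\<Sum>p\<in>Pow V1 \<times> Pow V2. card {E \<in> Pow (V1 \<times> V2). p \<in> tops V1 V2 E})"
proof -
  have fP: "finite (Pow V1 \<times> Pow V2)" "finite (Pow (V1 \<times> V2))" using f1 f2 by auto
  have "(\<Sum>E\<in>Pow (V1 \<times> V2). card (tops V1 V2 E))
      = (\<Sum>E\<in>Pow (V1 \<times> V2). \<Sum>p\<in>Pow V1 \<times> Pow V2. of_bool (p \<in> tops V1 V2 E))"
  proof (rule sum.cong[OF refl])
    fix E
    have "(\<Sum>p\<in>Pow V1 \<times> Pow V2. of_bool (p \<in> tops V1 V2 E)) = card ((Pow V1 \<times> Pow V2) \<inter> {p. p \<in> tops V1 V2 E})"
      using fP(1) by (simp only: sum_of_bool_eq) simp
    also have "(Pow V1 \<times> Pow V2) \<inter> {p. p \<in> tops V1 V2 E} = tops V1 V2 E" using tops_sub by blast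
    finally show "card (tops V1 V2 E) = (\<Sum>p\<in>Pow V1 \<times> Pow V2. of_bool (p \<in> tops V1 V2 E))" by simp
  qed
  also have "\<dots> = (\<Sum>p\<in>Pow V1 \<times> Pow V2. \<Sum>E\<in>Pow (V1 \<times> V2). of_bool (p \<in> tops V1 V2 E))"
    by (rule sum.swap)
  also have "\<dots> = (\<Sum>p\<in>Pow V1 \<times> Pow V2. card {E \<in> Pow (V1 \<times> V2). p \<in> tops V1 V2 E})"
  proof (rule sum.cong[OF refl])
    fix p
    have "(\<Sum>E\<in>Pow (V1 \<times> V2). of_bool (p \<in> tops V1 V2 E)) = card (Pow (V1 \<times> V2) \<inter> {E. p \<in> tops V1 V2 E})"
      using fP(2) by (simp only: sum_of_bool_eq) simp
    also have "Pow (V1 \<times> V2) \<inter> {E. p \<in> tops V1 V2 E} = {E \<in> Pow (V1 \<times> V2). p \<in> tops V1 V2 E}" by blast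
    finally show "(\<Sum>E\<in>Pow (V1 \<times> V2). of_bool (p \<in> tops V1 V2 E)) = card {E \<in> Pow (V1 \<times> V2). p \<in> tops V1 V2 E}" by simp
  qed
  finally show ?thesis .
qed

lemma comb_nat:
  "(\<Sum>a\<le>n. \<Sum>b\<le>m. (n choose a) * (m choose b) * tau a b * 2 ^ ((n - a) * (m - b)))
   = (\<Sum>E\<in>Pow ({0..<n} \<times> {0..<m}). card (tops {0..<n} {0..<m} E))"
proof -
  let ?V1 = "{0..<n::nat}" and ?V2 = "{0..<m::nat}"
  let ?F = "\<lambda>a b. 2 ^ ((n - a) * (m - b)) * tau a b"
  have "(\<Sum>A\<in>Pow ?V1. \<Sum>C\<in>Pow ?V2. ?F (card A) (card C))
      = (\<Sum>A\<in>Pow ?V1. \<Sum>b\<le>m. (m choose b) * ?F (card A) b)"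
  proof (rule sum.cong[OF refl])
    fix A
    show "(\<Sum>C\<in>Pow ?V2. ?F (card A) (card C)) = (\<Sum>b\<le>m. (m choose b) * ?F (card A) b)"
      using sum_Pow_card[of ?V2 "\<lambda>c. ?F (card A) c"] by simp
  qed
  also have "\<dots> = (\<Sum>a\<le>n. (n choose a) * (\<Sum>b\<le>m. (m choose b) * ?F a b))"
    using sum_Pow_card[where S = "?V1" and f = "\<lambda>a. \<Sum>b\<le>m. (m choose b) * ?F a b"] by simp
  also have "\<dots> = (\<Sum>a\<le>n. \<Sum>b\<le>m. (n choose a) * (m choose b) * tau a b * 2 ^ ((n - a) * (m - b)))"
    by (simp add: sum_distrib_left mult_ac)
  finally have 1: "(\<Sum>a\<le>n. \<Sum>b\<le>m. (n choose a) * (m choose b) * tau a b * 2 ^ ((n - a) * (m - b)))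
     = (\<Sum>A\<in>Pow ?V1. \<Sum>C\<in>Pow ?V2. ?F (card A) (card C))" by simp
  have 2: "(\<Sum>A\<in>Pow ?V1. \<Sum>C\<in>Pow ?V2. ?F (card A) (card C))
     = (\<Sum>A\<in>Pow ?V1. \<Sum>C\<in>Pow ?V2. card {E \<in> Pow (?V1 \<times> ?V2). (A, C) \<in> tops ?V1 ?V2 E})"
  proof (intro sum.cong refl)
    fix A C assume A: "A \<in> Pow ?V1" and C: "C \<in> Pow ?V2"
    have fA: "finite A" "finite C" using A C finite_subset by auto
    have "card (?V1 - A) = n - card A" "card (?V2 - C) = m - card C"
      using A C by (auto simp: card_Diff_subset fA)
    then show "?F (card A) (card C) = card {E \<in> Pow (?V1 \<times> ?V2). (A, C) \<in> tops ?V1 ?V2 E}"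
      using fiber_count[of ?V1 ?V2 A C] A C tc_tau[OF fA] by simp
  qed
  have 3: "(\<Sum>A\<in>Pow ?V1. \<Sum>C\<in>Pow ?V2. card {E \<in> Pow (?V1 \<times> ?V2). (A, C) \<in> tops ?V1 ?V2 E})
      = (\<Sum>p\<in>Pow ?V1 \<times> Pow ?V2. card {E \<in> Pow (?V1 \<times> ?V2). p \<in> tops ?V1 ?V2 E})"
    by (rule trans[OF sum.cartesian_product], rule sum.cong) auto
  show ?thesis unfolding 1 2 3 by (rule sum_tops[symmetric]) auto
qed

lemma comb_int:
  assumes "\<not> (n = 0 \<and> m = 0)"
  shows "(\<Sum>a\<le>n. \<Sum>b\<le>m. int (n choose a) * int (m choose b) * int (tau a b) * 2 ^ ((n - a) * (m - b)))
   = (2 ^ m - 1) ^ n + (2 ^ n - 1) ^ m - 2 ^ (n * m)"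
proof -
  let ?V1 = "{0..<n::nat}" and ?V2 = "{0..<m::nat}"
  let ?G = "Pow (?V1 \<times> ?V2)"
  let ?P1 = "\<lambda>E. \<forall>u\<in>?V1. \<exists>w\<in>?V2. (u, w) \<in> E"
  let ?P2 = "\<lambda>E. \<forall>w\<in>?V2. \<exists>u\<in>?V1. (u, w) \<notin> E"
  have "(\<Sum>a\<le>n. \<Sum>b\<le>m. int (n choose a) * int (m choose b) * int (tau a b) * 2 ^ ((n - a) * (m - b)))
      = int (\<Sum>a\<le>n. \<Sum>b\<le>m. (n choose a) * (m choose b) * tau a b * 2 ^ ((n - a) * (m - b)))"
    by simp
  also have "\<dots> = (\<Sum>E\<in>?G. int (card (tops ?V1 ?V2 E)))" unfolding comb_nat by simp
  also have "\<dots> = (\<Sum>E\<in>?G. of_bool (?P1 E) + of_bool (?P2 E) - 1)"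
  proof (rule sum.cong[OF refl])
    fix E assume "E \<in> ?G"
    then have "E \<subseteq> ?V1 \<times> ?V2" by simp
    then show "int (card (tops ?V1 ?V2 E)) = of_bool (?P1 E) + of_bool (?P2 E) - 1"
      using tops_count[of ?V1 ?V2 E] assms by simp
  qed
  also have "\<dots> = int (card (?G \<inter> {E. ?P1 E})) + int (card (?G \<inter> {E. ?P2 E})) - int (card ?G)"
    by (simp add: sum.distrib sum_subtractf)
  also have "card (?G \<inter> {E. ?P1 E}) = (2 ^ m - 1) ^ n"
  proof -
    have key: "?P1 E = (\<forall>u\<in>?V1. E `` {u} \<noteq> {})" if "E \<subseteq> ?V1 \<times> ?V2" for E
      using that by blast
    have "?G \<inter> {E. ?P1 E} = {E \<in> Pow (?V1 \<times> ?V2). \<forall>u\<in>?V1. E `` {u} \<noteq> {}}"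
      by (rule set_eqI) (use key in auto)
    also have "card \<dots> = card {B \<in> Pow ?V2. B \<noteq> {}} ^ n" using count_rows[of ?V1 ?V2] by simp
    also have "{B \<in> Pow ?V2. B \<noteq> {}} = Pow ?V2 - {{}}" by blast
    also have "card (Pow ?V2 - {{}}) = 2 ^ m - 1" by (simp add: card_Pow)
    finally show ?thesis .
  qed
  also have "card (?G \<inter> {E. ?P2 E}) = (2 ^ n - 1) ^ m"
  proof -
    have key: "?P2 E = (\<forall>w\<in>?V2. E\<inverse> `` {w} \<noteq> ?V1)" if "E \<subseteq> ?V1 \<times> ?V2" for E
      using that by blast
    have "?G \<inter> {E. ?P2 E} = {E \<in> Pow (?V1 \<times> ?V2). \<forall>w\<in>?V2. E\<inverse> `` {w} \<noteq> ?V1}"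
      by (rule set_eqI) (use key in auto)
    also have "card \<dots> = card {B \<in> Pow ?V1. B \<noteq> ?V1} ^ m" using count_cols[of ?V1 ?V2] by simp
    also have "{B \<in> Pow ?V1. B \<noteq> ?V1} = Pow ?V1 - {?V1}" by blast
    also have "card (Pow ?V1 - {?V1}) = 2 ^ n - 1" by (simp add: card_Pow)
    finally show ?thesis .
  qed
  also have "card ?G = 2 ^ (n * m)" by (simp add: card_Pow card_cartesian_product)
  finally show ?thesis by (simp add: of_nat_diff)
qed


unbundle fps_syntax

definition hh :: "nat \<Rightarrow> nat \<Rightarrow> int" where
  "hh a b = (if b = 0 then (-1) ^ a else 0) + (if a = 0 then (-1) ^ b else 0)
            - (if a = 0 \<and> b = 0 then 1 else 0) - int (tau a b)"

lemma main_int: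
  "(\<Sum>a\<le>n. \<Sum>b\<le>m. int (n choose a) * int (m choose b) * hh a b * 2 ^ ((n - a) * (m - b)))
    = (if n = 0 \<and> m = 0 then 1 else 0)"
proof -
  let ?X1 = "\<lambda>a b. if b = 0 then int (n choose a) * (-1) ^ a * 2 ^ ((n - a) * m) else 0"
  let ?X2 = "\<lambda>a b. if a = 0 then int (m choose b) * (-1) ^ b * 2 ^ (n * (m - b)) else 0"
  let ?X3 = "\<lambda>a b. if a = 0 \<and> b = 0 then (2::int) ^ (n * m) else 0"
  let ?X4 = "\<lambda>a b. int (n choose a) * int (m choose b) * int (tau a b) * 2 ^ ((n - a) * (m - b))"
  have tm: "int (n choose a) * int (m choose b) * hh a b * 2 ^ ((n - a) * (m - b))
      = ?X1 a b + ?X2 a b - ?X3 a b - ?X4 a b" for a b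
    unfolding hh_def by (simp add: algebra_simps)
  have s1: "(\<Sum>a\<le>n. \<Sum>b\<le>m. ?X1 a b) = (2 ^ m - 1) ^ n"
  proof -
    have "(\<Sum>a\<le>n. \<Sum>b\<le>m. ?X1 a b) = (\<Sum>a\<le>n. int (n choose a) * (-1) ^ a * (2 ^ m) ^ (n - a))"
      by (rule sum.cong[OF refl]) (simp add: power_mult[symmetric] mult.commute)
    also have "\<dots> = (-1 + 2 ^ m) ^ n" by (subst binomial_ring) simp
    finally show ?thesis by simp
  qed
  have s2: "(\<Sum>a\<le>n. \<Sum>b\<le>m. ?X2 a b) = (2 ^ n - 1) ^ m"
  proof -
    have "(\<Sum>a\<le>n. \<Sum>b\<le>m. ?X2 a b) = (\<Sum>b\<le>m. \<Sum>a\<le>n. ?X2 a b)" by (rule sum.swap)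
    also have "\<dots> = (\<Sum>b\<le>m. int (m choose b) * (-1) ^ b * (2 ^ n) ^ (m - b))"
      by (rule sum.cong[OF refl]) (simp add: power_mult[symmetric])
    also have "\<dots> = (-1 + 2 ^ n) ^ m" by (subst binomial_ring) simp
    finally show ?thesis by simp
  qed
  have s3: "(\<Sum>a\<le>n. \<Sum>b\<le>m. ?X3 a b) = 2 ^ (n * m)"
  proof -
    have "(\<Sum>a\<le>n. \<Sum>b\<le>m. ?X3 a b) = (\<Sum>a\<le>n. if a = 0 then (2::int) ^ (n * m) else 0)"
      by (rule sum.cong[OF refl]) simp
    then show ?thesis by simp
  qed
  have "(\<Sum>a\<le>n. \<Sum>b\<le>m. int (n choose a) * int (m choose b) * hh a b * 2 ^ ((n - a) * (m - b)))
      = (\<Sum>a\<le>n. \<Sum>b\<le>m. ?X1 a b) + (\<Sum>a\<le>n. \<Sum>b\<le>m. ?X2 a b) - (\<Sum>a\<le>n. \<Sum>b\<le>m. ?X3 a b)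
        - (\<Sum>a\<le>n. \<Sum>b\<le>m. ?X4 a b)"
    unfolding tm by (simp only: sum.distrib sum_subtractf)
  also have "\<dots> = (2 ^ m - 1) ^ n + (2 ^ n - 1) ^ m - 2 ^ (n * m) - (\<Sum>a\<le>n. \<Sum>b\<le>m. ?X4 a b)"
    unfolding s1 s2 s3 ..
  also have "\<dots> = (if n = 0 \<and> m = 0 then 1 else 0)"
  proof (cases "n = 0 \<and> m = 0")
    case True
    have "tau 0 0 = 0" unfolding tau_def tangle_def by simp
    then show ?thesis using True by simp
  next
    case False
    then show ?thesis using comb_int[OF False] by simp
  qed
  finally show ?thesis .
qed

lemma ET_coeff:
  "(exp_neg_x + exp_neg_y - 1 - T_lbl) $ a $ b = real_of_int (hh a b) / (fact a * fact b)"
  by (auto simp: exp_neg_x_def exp_neg_y_def T_lbl_def hh_def field_simps)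

lemma B_coeff: "B_lbl $ i $ j = 2 ^ (i * j) / (fact i * fact j)"
  by (simp add: B_lbl_def)

lemma prod_coeff:
  "((exp_neg_x + exp_neg_y - 1 - T_lbl) * B_lbl) $ n $ m = (1 :: real fps fps) $ n $ m"
proof -
  let ?F = "exp_neg_x + exp_neg_y - 1 - T_lbl"
  have "(?F * B_lbl) $ n $ m = (\<Sum>a=0..n. \<Sum>b=0..m. ?F $ a $ b * B_lbl $ (n - a) $ (m - b))"
    by (simp add: fps_mult_nth fps_sum_nth)
  also have "\<dots> = (\<Sum>a=0..n. \<Sum>b=0..m. real_of_int (int (n choose a) * int (m choose b) * hh a b * 2 ^ ((n - a) * (m - b))) / (fact n * fact m))"
  proof (intro sum.cong refl)
    fix a b assume a: "a \<in> {0..n}" and b: "b \<in> {0..m}"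
    have ca: "real (n choose a) = fact n / (fact a * fact (n - a))" using a by (simp add: binomial_fact)
    have cb: "real (m choose b) = fact m / (fact b * fact (m - b))" using b by (simp add: binomial_fact)
    show "?F $ a $ b * B_lbl $ (n - a) $ (m - b) = real_of_int (int (n choose a) * int (m choose b) * hh a b * 2 ^ ((n - a) * (m - b))) / (fact n * fact m)"
      unfolding ET_coeff B_coeff by (simp add: ca cb field_simps)
  qed
  also have "\<dots> = real_of_int (\<Sum>a\<le>n. \<Sum>b\<le>m. int (n choose a) * int (m choose b) * hh a b * 2 ^ ((n - a) * (m - b))) / (fact n * fact m)"
    by (simp add: sum_divide_distrib atLeast0AtMost)
  also have "\<dots> = (1 :: real fps fps) $ n $ m"
    unfolding main_int by auto
  finally show ?thesis .
qed

theorem theorem4p3: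
  shows "T_lbl = exp_neg_x + exp_neg_y - 1 - inverse B_lbl"
proof -
  let ?F = "exp_neg_x + exp_neg_y - 1 - T_lbl"
  have FB: "?F * B_lbl = 1" by (rule fps_ext, rule fps_ext, rule prod_coeff)
  have B0: "B_lbl $ 0 = fps_exp 1" by (simp add: B_lbl_def fps_eq_iff)
  have "B_lbl $ 0 * inverse (B_lbl $ 0) = 1" unfolding B0
    by (rule inverse_mult_eq_1') simp
  then have BI: "B_lbl * inverse B_lbl = 1"
    using fps_right_inverse[of B_lbl "inverse (B_lbl $ 0)"] by (simp add: fps_inverse_def)
  have "inverse B_lbl = (?F * B_lbl) * inverse B_lbl" using FB by simp
  also have "\<dots> = ?F" using BI by (simp add: mult.assoc)
  finally show ?thesis by (simp add: algebra_simps)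
qed


end
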